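(* Let $k$ be a positive integer, let $N$ be an integer with $\gcd(N,k!)=1$, and let $A=\{a_1,a_2,\dots,a_n\}\subseteq\mathbb{Z}_N$ be a $k$-fold Sidon set. Let $k_+,k_-$ be integers with $0\leq k_-\leq k_+\leq k$ and $k_++k_-\geq 1$. In the group $G \triangleq \mathbb{Z}_{2(k_++k_-)+1} \times \mathbb{Z}_N$ let \[S\triangleq \{ (1,x) : x \in A\}.\] Then $G \ge [-k_-,k_+]^* \diamond_2 S$.
   Context: $[a,b]=\{a,a+1,\dots,b\}$ and $[a,b]^*=[a,b]\setminus\{0\}$. $k$-fold Sidon sets: let $k\ge1$ and $\gcd(N,k!)=1$. For integers $c_1,c_2,c_3,c_4\in[-k,k]$ with $c_1+c_2+c_3+c_4=0$, let $\mathcal{S}$ be the collection of sets $T\subseteq\{1,2,3,4\}$ such that $\sum_{i\in T}c_i=0$ and $c_i\ne0$ for all $i\in T$ (so $\varnothing\in\mathcal{S}$). A solution $(x_1,x_2,x_3,x_4)\in\mathbb{Z}_N^4$ of $c_1x_1+c_2x_2+c_3x_3+c_4x_4\equiv0\pmod N$ is trivial if there is a partition of $\{i: c_i\ne0\}$ into two sets $T_1,T_2\in\mathcal{S}$ such that $x_i=x_j$ for all $i,j\in T_1$ and for all $i,j\in T_2$. A set $A\subseteq\mathbb{Z}_N$ is a $k$-fold Sidon set if for every such $c_1,\dots,c_4$, this equation has only trivial solutions with $x_1,\dots,x_4\in A$. For a finite Abelian group $G$, a finite set $M\subseteq\mathbb{Z}\setminus\{0\}$ and $S=\{s_1,\dots,s_n\}\subseteq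 G$, we write $G\ge M\diamond_t S$ if the elements $\sum_i e_is_i$, over all $\mathbf{e}\in(M\cup\{0\})^n$ with $1\le\mathrm{wt}(\mathbf{e})\le t$, are all distinct and non-zero in $G$ ($\mathrm{wt}$ = Hamming weight). *)

theory Defs
  imports "HOL-Number_Theory.Number_Theory"
begin

text \<open>Z_N is represented by canonical integer representatives {0..<N}.
  Indices of the linear equation are 1,2,3,4.\<close>

definition zero_sum_sets :: "(nat \<Rightarrow> int) \<Rightarrow> nat set set" where
  "zero_sum_sets c = {T. T \<subseteq> {1..4} \<and> (\<Sum>i\<in>T. c i) = 0 \<and> (\<forall>i\<in>T. c i \<noteq> 0)}"

definition trivial_solution :: "(nat \<Rightarrow> int) \<Rightarrow> (nat \<Rightarrow> int) \<Rightarrow> bool" where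
  "trivial_solution c x \<longleftrightarrow>
     (\<exists>T1 T2. T1 \<in> zero_sum_sets c \<and> T2 \<in> zero_sum_sets c \<and> T1 \<inter> T2 = {} \<and>
        T1 \<union> T2 = {i \<in> {1..4}. c i \<noteq> 0} \<and>
        (\<forall>i\<in>T1. \<forall>j\<in>T1. x i = x j) \<and> (\<forall>i\<in>T2. \<forall>j\<in>T2. x i = x j))"

definition kfold_sidon :: "nat \<Rightarrow> int \<Rightarrow> int set \<Rightarrow> bool" where
  "kfold_sidon k N A \<longleftrightarrow> A \<subseteq> {0..<N} \<and>
     (\<forall>c :: nat \<Rightarrow> int. (\<forall>i\<in>{1..4}. c i \<in> {- int k..int k}) \<and> (\<Sum>i=1..4. c i) = 0 \<longrightarrow>
        (\<forall>x :: nat \<Rightarrow> int. (\<forall>i\<in>{1..4}. x i \<in> A) \<and> [(\<Sum>i=1..4. c i * x i) = 0] (mod N)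
            \<longrightarrow> trivial_solution c x))"

text \<open>The group G = Z_m x Z_N, elements represented by pairs of integers, compared
  componentwise modulo m and N.  For a finite set S of (distinct, canonical)
  representatives, a coefficient vector is a function e : S -> M \<union> {0} (zero outside S).\<close>

definition coeff_vectors :: "int set \<Rightarrow> nat \<Rightarrow> (int \<times> int) set \<Rightarrow> ((int \<times> int) \<Rightarrow> int) set" where
  "coeff_vectors M t S = {e. (\<forall>s\<in>S. e s \<in> insert 0 M) \<and> (\<forall>s. s \<notin> S \<longrightarrow> e s = 0) \<and>
        1 \<le> card {s\<in>S. e s \<noteq> 0} \<and> card {s\<in>S. e s \<noteq> 0} \<le> t}"

definition lin_comb :: "int \<Rightarrow> int \<Rightarrow> (int \<times> int) set \<Rightarrow> ((int \<times> int) \<Rightarrow> int) \<Rightarrow> int \<times> int" where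
  "lin_comb m N S e = ((\<Sum>s\<in>S. e s * fst s) mod m, (\<Sum>s\<in>S. e s * snd s) mod N)"

definition diamond_ge :: "int \<Rightarrow> int \<Rightarrow> int set \<Rightarrow> nat \<Rightarrow> (int \<times> int) set \<Rightarrow> bool" where
  "diamond_ge m N M t S \<longleftrightarrow>
     inj_on (lin_comb m N S) (coeff_vectors M t S) \<and>
     (\<forall>e\<in>coeff_vectors M t S. lin_comb m N S e \<noteq> (0, 0))"

end

theory Submission
  imports Defs
begin

lemma triv_pointwise:
  assumes "trivial_solution c x"
  shows "(\<Sum>i\<in>{1..4::nat}. if x i = v then c i else 0) = 0"
proof -
  obtain T1 T2 where T1: "T1 \<in> zero_sum_sets c" and T2: "T2 \<in> zero_sum_sets c"
    and dis: "T1 \<inter> T2 = {}" and un: "T1 \<union> T2 = {i \<in> {1..4}. c i \<noteq> 0}"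
    and c1: "\<forall>i\<in>T1. \<forall>j\<in>T1. x i = x j" and c2: "\<forall>i\<in>T2. \<forall>j\<in>T2. x i = x j"
    using assms unfolding trivial_solution_def by blast
  have sub1: "T1 \<subseteq> {1..4}" and s1: "(\<Sum>i\<in>T1. c i) = 0" using T1 by (auto simp: zero_sum_sets_def)
  have sub2: "T2 \<subseteq> {1..4}" and s2: "(\<Sum>i\<in>T2. c i) = 0" using T2 by (auto simp: zero_sum_sets_def)
  have f1: "finite T1" using sub1 finite_subset by blast
  have f2: "finite T2" using sub2 finite_subset by blast
  have gen: "(\<Sum>i\<in>T. if x i = v then c i else 0) = 0"
    if "finite T" "(\<Sum>i\<in>T. c i) = 0" "\<forall>i\<in>T. \<forall>j\<in>T. x i = x j" for T
  proof (cases "\<exists>j\<in>T. x j = v")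
    case True
    then have "\<forall>i\<in>T. x i = v" using that(3) by metis
    then have "(\<Sum>i\<in>T. if x i = v then c i else 0) = (\<Sum>i\<in>T. c i)" by (intro sum.cong) auto
    then show ?thesis using that(2) by simp
  next
    case False
    then show ?thesis by (intro sum.neutral) auto
  qed
  have "(\<Sum>i\<in>{1..4::nat}. if x i = v then c i else 0) = (\<Sum>i\<in>{i \<in> {1..4}. c i \<noteq> 0}. if x i = v then c i else 0)"
    by (intro sum.mono_neutral_right) auto
  also have "\<dots> = (\<Sum>i\<in>T1. if x i = v then c i else 0) + (\<Sum>i\<in>T2. if x i = v then c i else 0)"
    unfolding un[symmetric] using f1 f2 dis by (intro sum.union_disjoint)
  also have "\<dots> = 0" using gen[OF f1 s1 c1] gen[OF f2 s2 c2] by simp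
  finally show ?thesis .
qed

lemma rep:
  fixes S :: "(int \<times> int) set" and A :: "int set"
  assumes e: "e \<in> coeff_vectors M 2 S" and S: "S = {(1, x) | x. x \<in> A}" and fin: "finite A"
    and M0: "0 \<notin> M"
  obtains x1 x2 a1 a2 where "x1 \<in> A" "x2 \<in> A" "a1 \<in> M" "a2 = 0 \<or> (x1 \<noteq> x2 \<and> a2 \<in> M)"
    "\<And>v. v \<in> A \<Longrightarrow> e (1, v) = (if v = x1 then a1 else 0) + (if v = x2 then a2 else 0)"
    "\<And>s. s \<notin> S \<Longrightarrow> e s = 0"
proof -
  define D where "D = {s\<in>S. e s \<noteq> 0}"
  have eM: "\<And>s. s \<in> S \<Longrightarrow> e s \<in> insert 0 M" and out: "\<And>s. s \<notin> S \<Longrightarrow> e s = 0"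
    and card: "1 \<le> card D" "card D \<le> 2" using e unfolding coeff_vectors_def D_def by auto
  have "card D = 1 \<or> card D = 2" using card by linarith
  then show ?thesis
  proof
    assume "card D = 1"
    then obtain s where Ds: "D = {s}" by (rule card_1_singletonE)
    then have "s \<in> S" "e s \<noteq> 0" unfolding D_def by auto
    then obtain x1 where x1: "x1 \<in> A" "s = (1, x1)" using S by auto
    have a1: "e s \<in> M" using eM[OF \<open>s \<in> S\<close>] \<open>e s \<noteq> 0\<close> by auto
    show ?thesis
    proof (rule that[of x1 x1 "e s" 0])
      fix v assume "v \<in> A"
      then have "(1, v) \<in> S" using S by auto
      then show "e (1, v) = (if v = x1 then e s else 0) + (if v = x1 then 0 else 0)"
        using Ds x1 unfolding D_def by auto
    qed (use x1 a1 out in auto)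
  next
    assume "card D = 2"
    then obtain s t where Ds: "D = {s, t}" and st: "s \<noteq> t" by (meson card_2_iff)
    then have "s \<in> S" "e s \<noteq> 0" "t \<in> S" "e t \<noteq> 0" unfolding D_def by auto
    then obtain x1 x2 where x: "x1 \<in> A" "s = (1, x1)" "x2 \<in> A" "t = (1, x2)" using S by auto
    have a: "e s \<in> M" "e t \<in> M" using eM[OF \<open>s \<in> S\<close>] eM[OF \<open>t \<in> S\<close>] \<open>e s \<noteq> 0\<close> \<open>t \<in> S\<close> \<open>e t \<noteq> 0\<close> by auto
    have ne: "x1 \<noteq> x2" using st x by auto
    show ?thesis
    proof (rule that[of x1 x2 "e s" "e t"])
      fix v assume "v \<in> A"
      then have "(1, v) \<in> S" using S by auto
      then show "e (1, v) = (if v = x1 then e s else 0) + (if v = x2 then e t else 0)"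
        using Ds x ne unfolding D_def by auto
    qed (use x a ne out in auto)
  qed
qed

lemma sums:
  fixes S :: "(int \<times> int) set" and A :: "int set"
  assumes S: "S = {(1, x) | x. x \<in> A}" and fin: "finite A" "x1 \<in> A" "x2 \<in> A"
    and ev: "\<And>v. v \<in> A \<Longrightarrow> e (1, v) = (if v = x1 then a1 else 0) + (if v = x2 then a2 else 0)"
  shows "(\<Sum>s\<in>S. e s * fst s) = a1 + a2" "(\<Sum>s\<in>S. e s * snd s) = a1 * x1 + a2 * x2"
proof -
  have SS: "S = (\<lambda>x. (1::int, x)) ` A" using S by auto
  have inj: "inj_on (\<lambda>x. (1::int, x)) A" by (auto simp: inj_on_def)
  have "(\<Sum>s\<in>S. e s * fst s) = (\<Sum>v\<in>A. e (1, v))" unfolding SS sum.reindex[OF inj] by simp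
  also have "\<dots> = (\<Sum>v\<in>A. (if v = x1 then a1 else 0) + (if v = x2 then a2 else 0))"
    using ev by (intro sum.cong) auto
  also have "\<dots> = a1 + a2" using fin by (simp add: sum.distrib)
  finally show "(\<Sum>s\<in>S. e s * fst s) = a1 + a2" .
  have "(\<Sum>s\<in>S. e s * snd s) = (\<Sum>v\<in>A. e (1, v) * v)" unfolding SS sum.reindex[OF inj] by simp
  also have "\<dots> = (\<Sum>v\<in>A. (if v = x1 then a1 * v else 0) + (if v = x2 then a2 * v else 0))"
    using ev by (intro sum.cong) (auto simp: algebra_simps)
  also have "\<dots> = a1 * x1 + a2 * x2" using fin by (cases "x1 = x2") (simp_all add: sum.distrib algebra_simps)
  finally show "(\<Sum>s\<in>S. e s * snd s) = a1 * x1 + a2 * x2" .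
qed

lemma mod_close:
  fixes a b m :: int
  assumes "a mod m = b mod m" "m > 0" "\<bar>a - b\<bar> < m"
  shows "a = b"
proof -
  have "m dvd (a - b)" using assms(1) by (simp add: mod_eq_dvd_iff)
  then obtain q where q: "a - b = m * q" by (auto elim: dvdE)
  have "q = 0"
  proof (rule ccontr)
    assume "q \<noteq> 0"
    then have "\<bar>m * q\<bar> \<ge> m" using assms(2) by (simp add: abs_mult)
    then show False using q assms(3) by simp
  qed
  then show ?thesis using q by simp
qed

lemma sum4: "(\<Sum>i\<in>{1..4::nat}. f i) = f 1 + f 2 + f 3 + f 4"
proof -
  have "{1..4::nat} = {1,2,3,4}" by auto
  then show ?thesis by (simp add: add.assoc)
qed

lemma set14: "{1..4::nat} = {1,2,3,4}" by auto

theorem theorem10: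
  fixes k kp km :: nat and N :: int and A :: "int set"
  assumes "k \<ge> 1"
    and "N \<ge> 1"
    and "gcd N (fact k) = 1"
    and "finite A"
    and "kfold_sidon k N A"
    and "km \<le> kp" and "kp \<le> k" and "kp + km \<ge> 1"
  shows "diamond_ge (2 * int (kp + km) + 1) N ({- int km..int kp} - {0}) 2 {(1, x) | x. x \<in> A}"
proof -
  define m where "m = 2 * int (kp + km) + 1"
  define M where "M = {- int km..int kp} - {0}"
  define S where "S = {(1::int, x) | x. x \<in> A}"
  have m0: "m > 0" unfolding m_def by simp
  have M0: "0 \<notin> M" unfolding M_def by simp
  have Mb: "\<And>a. a \<in> M \<Longrightarrow> - int km \<le> a \<and> a \<le> int kp \<and> a \<noteq> 0" unfolding M_def by auto
  have sid: "\<And>c x. (\<forall>i\<in>{1..4}. c i \<in> {- int k..int k}) \<Longrightarrow> (\<Sum>i=1..4. c i) = 0 \<Longrightarrow>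
      (\<forall>i\<in>{1..4::nat}. x i \<in> A) \<Longrightarrow> [(\<Sum>i=1..4. c i * x i) = 0] (mod N) \<Longrightarrow> trivial_solution c x"
    using assms(5) unfolding kfold_sidon_def by blast
  have nz: "lin_comb m N S e \<noteq> (0, 0)" if e: "e \<in> coeff_vectors M 2 S" for e
  proof
    assume eq: "lin_comb m N S e = (0, 0)"
    obtain x1 x2 a1 a2 where x: "x1 \<in> A" "x2 \<in> A" and a1: "a1 \<in> M" and a2: "a2 = 0 \<or> (x1 \<noteq> x2 \<and> a2 \<in> M)"
      and ev: "\<And>v. v \<in> A \<Longrightarrow> e (1, v) = (if v = x1 then a1 else 0) + (if v = x2 then a2 else 0)"
      and out: "\<And>s. s \<notin> S \<Longrightarrow> e s = 0"
      by (rule rep[OF e S_def assms(4) M0]) (rule that)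
    note sm = sums[OF S_def assms(4) x ev]
    have e1: "(a1 + a2) mod m = 0 mod m" and e2: "(a1 * x1 + a2 * x2) mod N = 0"
      using eq sm unfolding lin_comb_def by auto
    show False using a2
    proof
      assume "a2 = 0"
      have "\<bar>a1 - 0\<bar> < m" unfolding abs_less_iff m_def using Mb[OF a1] by auto
      then have "a1 = 0" using mod_close[of a1 m 0] e1 m0 \<open>a2 = 0\<close> by simp
      then show False using Mb[OF a1] by simp
    next
      assume h: "x1 \<noteq> x2 \<and> a2 \<in> M"
      have "\<bar>(a1 + a2) - 0\<bar> < m" unfolding abs_less_iff m_def using Mb[OF a1] Mb[of a2] h by auto
      then have "a1 + a2 = 0" using mod_close[of "a1 + a2" m 0] e1 m0 by simp
      define c :: "nat \<Rightarrow> int" where "c = (\<lambda>i. if i = 1 then a1 else if i = 2 then a2 else 0)"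
      define xx :: "nat \<Rightarrow> int" where "xx = (\<lambda>i. if i = 2 then x2 else x1)"
      have "trivial_solution c xx"
      proof (rule sid)
        show "\<forall>i\<in>{1..4}. c i \<in> {- int k..int k}" unfolding c_def set14
          using Mb[OF a1] Mb[of a2] h assms(6,7) by auto
        show "(\<Sum>i=1..4. c i) = 0" unfolding c_def set14 using \<open>a1 + a2 = 0\<close> by simp
        show "\<forall>i\<in>{1..4::nat}. xx i \<in> A" unfolding xx_def using x by auto
        show "[(\<Sum>i=1..4. c i * xx i) = 0] (mod N)" unfolding c_def xx_def set14 cong_def
          using e2 by simp
      qed
      from triv_pointwise[OF this, of x1] have "a1 = 0" unfolding c_def xx_def set14 using h by simp
      then show False using Mb[OF a1] by simp
    qed
  qed
  have inj: "inj_on (lin_comb m N S) (coeff_vectors M 2 S)"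
  proof (rule inj_onI)
    fix e e' assume e: "e \<in> coeff_vectors M 2 S" and e': "e' \<in> coeff_vectors M 2 S"
      and eq: "lin_comb m N S e = lin_comb m N S e'"
    obtain x1 x2 a1 a2 where x: "x1 \<in> A" "x2 \<in> A" and a1: "a1 \<in> M" and a2: "a2 = 0 \<or> (x1 \<noteq> x2 \<and> a2 \<in> M)"
      and ev: "\<And>v. v \<in> A \<Longrightarrow> e (1, v) = (if v = x1 then a1 else 0) + (if v = x2 then a2 else 0)"
      and out: "\<And>s. s \<notin> S \<Longrightarrow> e s = 0"
      by (rule rep[OF e S_def assms(4) M0]) (rule that)
    obtain y1 y2 b1 b2 where y: "y1 \<in> A" "y2 \<in> A" and b1: "b1 \<in> M" and b2: "b2 = 0 \<or> (y1 \<noteq> y2 \<and> b2 \<in> M)"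
      and ev': "\<And>v. v \<in> A \<Longrightarrow> e' (1, v) = (if v = y1 then b1 else 0) + (if v = y2 then b2 else 0)"
      and out': "\<And>s. s \<notin> S \<Longrightarrow> e' s = 0"
      by (rule rep[OF e' S_def assms(4) M0]) (rule that)
    note sm = sums[OF S_def assms(4) x ev]
    note sm' = sums[OF S_def assms(4) y ev']
    have e1: "(a1 + a2) mod m = (b1 + b2) mod m" and e2: "(a1 * x1 + a2 * x2) mod N = (b1 * y1 + b2 * y2) mod N"
      using eq unfolding lin_comb_def by (simp_all add: sm sm')
    have ba2: "- int km \<le> a2 \<and> a2 \<le> int kp" using a2 Mb[of a2] by force
    have bb2: "- int km \<le> b2 \<and> b2 \<le> int kp" using b2 Mb[of b2] by force
    have "\<bar>(a1 + a2) - (b1 + b2)\<bar> < m" unfolding abs_less_iff m_def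
      using Mb[OF a1] Mb[OF b1] ba2 bb2 by auto
    then have s: "a1 + a2 = b1 + b2" using mod_close[OF e1 m0] by blast
    define c :: "nat \<Rightarrow> int" where "c = (\<lambda>i. if i = 1 then a1 else if i = 2 then a2 else if i = 3 then - b1 else - b2)"
    define xx :: "nat \<Rightarrow> int" where "xx = (\<lambda>i. if i = 1 then x1 else if i = 2 then x2 else if i = 3 then y1 else y2)"
    have "trivial_solution c xx"
    proof (rule sid)
      show "\<forall>i\<in>{1..4}. c i \<in> {- int k..int k}" unfolding c_def set14
        using Mb[OF a1] Mb[OF b1] ba2 bb2 assms(6,7) by auto
      show "(\<Sum>i=1..4. c i) = 0" unfolding c_def set14 using s by simp
      show "\<forall>i\<in>{1..4::nat}. xx i \<in> A" unfolding xx_def set14 using x y by auto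
      have "N dvd ((a1 * x1 + a2 * x2) - (b1 * y1 + b2 * y2))" using e2 by (simp add: mod_eq_dvd_iff)
      moreover have "(\<Sum>i=1..4. c i * xx i) = (a1 * x1 + a2 * x2) - (b1 * y1 + b2 * y2)"
        unfolding sum4 c_def xx_def by simp
      ultimately show "[(\<Sum>i=1..4. c i * xx i) = 0] (mod N)" unfolding cong_def
        by (simp add: dvd_imp_mod_0)
    qed
    note tp = triv_pointwise[OF this]
    have cx: "c 1 = a1" "c 2 = a2" "c 3 = - b1" "c 4 = - b2" "xx 1 = x1" "xx 2 = x2" "xx 3 = y1" "xx 4 = y2"
      unfolding c_def xx_def by simp_all
    have pt: "e (1, v) = e' (1, v)" if v: "v \<in> A" for v
    proof -
      have h: "(if x1 = v then a1 else 0) + (if x2 = v then a2 else 0) + (if y1 = v then - b1 else 0) + (if y2 = v then - b2 else 0) = 0"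
        using tp[of v] unfolding sum4 cx .
      have h2: "(if x1 = v then a1 else 0) + (if x2 = v then a2 else 0) = (if y1 = v then b1 else 0) + (if y2 = v then b2 else 0)"
        using h by (smt (verit))
      show ?thesis unfolding ev[OF v] ev'[OF v] using h2 by (simp add: eq_commute)
    qed
    show "e = e'"
    proof
      fix s show "e s = e' s"
      proof (cases "s \<in> S")
        case True
        then obtain v where "v \<in> A" "s = (1, v)" unfolding S_def by auto
        then show ?thesis using pt by simp
      next
        case False
        then show ?thesis using out out' by simp
      qed
    qed
  qed
  show ?thesis unfolding diamond_ge_def m_def[symmetric] M_def[symmetric] S_def[symmetric]
    using inj nz by blast
qed

end
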